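(* Let $(S,\mathcal F,\mathcal L)$ be a $p$-local finite group with $S$ abelian. Then $(S,\mathcal F,\mathcal L)$ is nilpotent if and only if one of the following two conditions is satisfied: (1) two elements $a,b\in S$ are $\mathcal F$-conjugate if and only if they are equal; (2) $\mathrm{Aut}_{\mathcal F}(S)$ is the trivial group.
   Context: Elements $a,b\in S$ are $\mathcal F$-conjugate if there is $\phi\in\mathrm{Hom}_{\mathcal F}(\langle a\rangle,S)$ with $\phi(a)=b$. Let $p$ be a prime and $S$ a finite $p$-group. For $P,Q\le S$, $\mathrm{Hom}_S(P,Q)$ is the set of maps $c_g\colon x\mapsto gxg^{-1}$ with $g\in S$, $gPg^{-1}\le Q$, and $\mathrm{Aut}_S(P)=\mathrm{Hom}_S(P,P)$. A fusion system $\mathcal F$ over $S$ is a category whose objects are the subgroups of $S$, with $\mathrm{Hom}_S(P,Q)\subseteq\mathrm{Hom}_{\mathcal F}(P,Q)\subseteq \mathrm{Inj}(P,Q)$, such that every morphism factors as an $\mathcal F$-isomorphism followed by an inclusion. Subgroups are $\mathcal F$-conjugate if they are isomorphic in $\mathcal F$. $P$ is fully centralized (resp. fully normalized) if $|C_S(P)|\ge |C_S(P')|$ (resp. $|N_S(P)|\ge|N_S(P')|$) for all $P'$ $\mathcal F$-conjugate to $P$. $\mathcal F$ is saturated if (I) every fully normalized $P$ is fully centralized and $\mathrm{Aut}_S(P)$ is a Sylow $p$-subgroup of $\mathrm{Aut}_{\mathcal F}(P)$, and (II) whenever $\phi\in\mathrm{Hom}_{\mathcal F}(P,S)$ with $\phi(P)$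 fully centralized, $\phi$ extends to a morphism in $\mathcal F$ defined on $N_\phi=\{g\in N_S(P):\phi c_g\phi^{-1}\in \mathrm{Aut}_S(\phi(P))\}$. $P$ is $\mathcal F$-centric if $C_S(P')\le P'$ for all $P'$ $\mathcal F$-conjugate to $P$; $\mathcal F^c$ is the full subcategory on these. A centric linking system associated to $\mathcal F$ is a category $\mathcal L$ with objects the $\mathcal F$-centric subgroups, a functor $\pi\colon\mathcal L\to\mathcal F^c$ which is the identity on objects, and monomorphisms $\delta_P\colon P\to\mathrm{Aut}_{\mathcal L}(P)$, such that (A) $Z(P)$ (via $\delta_P$) acts freely on $\mathrm{Mor}_{\mathcal L}(P,Q)$ by composition and $\pi$ induces a bijection $\mathrm{Mor}_{\mathcal L}(P,Q)/Z(P)\to\mathrm{Hom}_{\mathcal F}(P,Q)$; (B) $\pi(\delta_P(g))=c_g$ for $g\in P$; (C) $f\circ\delta_P(g)=\delta_Q(\pi(f)(g))\circ f$ for $f\in\mathrm{Mor}_{\mathcal L}(P,Q)$, $g\in P$. A $p$-local finite group is a triple $(S,\mathcal F,\mathcal L)$ with $\mathcal F$ a saturated fusion system over $S$ and $\mathcal L$ an associated centric linking system. $(S,\mathcal F,\mathcal L)$ is called nilpotent if $\mathcal F=\mathcal F_S(S)$, the fusion system with $\mathrm{Hom}_{\mathcal F_S(S)}(P,Q)=\mathrm{Hom}_S(P,Q)$. *)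

theory Defs
  imports "HOL-Algebra.Algebra" "HOL-Library.FuncSet"
begin

definition p_group :: "nat \<Rightarrow> ('a, 'b) monoid_scheme \<Rightarrow> bool" where
  "p_group p S \<longleftrightarrow> Factorial_Ring.prime p \<and> group S \<and> finite (carrier S) \<and> (\<exists>n. card (carrier S) = p ^ n)"

definition conjS :: "('a, 'b) monoid_scheme \<Rightarrow> 'a \<Rightarrow> 'a \<Rightarrow> 'a" where
  "conjS S g x = g \<otimes>\<^bsub>S\<^esub> x \<otimes>\<^bsub>S\<^esub> inv\<^bsub>S\<^esub> g"

(* Hom_S(P,Q); maps are represented as functions extensional on their domain P *)
definition HomS :: "('a, 'b) monoid_scheme \<Rightarrow> 'a set \<Rightarrow> 'a set \<Rightarrow> ('a \<Rightarrow> 'a) set" where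
  "HomS S P Q = {restrict (conjS S g) P | g. g \<in> carrier S \<and> conjS S g ` P \<subseteq> Q}"

definition InjS :: "('a, 'b) monoid_scheme \<Rightarrow> 'a set \<Rightarrow> 'a set \<Rightarrow> ('a \<Rightarrow> 'a) set" where
  "InjS S P Q = {\<phi>. \<phi> \<in> extensional P \<and> \<phi> ` P \<subseteq> Q \<and> inj_on \<phi> P \<and>
                    (\<forall>x\<in>P. \<forall>y\<in>P. \<phi> (x \<otimes>\<^bsub>S\<^esub> y) = \<phi> x \<otimes>\<^bsub>S\<^esub> \<phi> y)}"

definition CS :: "('a, 'b) monoid_scheme \<Rightarrow> 'a set \<Rightarrow> 'a set" where
  "CS S P = {g \<in> carrier S. \<forall>x\<in>P. g \<otimes>\<^bsub>S\<^esub> x = x \<otimes>\<^bsub>S\<^esub> g}"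

definition NS :: "('a, 'b) monoid_scheme \<Rightarrow> 'a set \<Rightarrow> 'a set" where
  "NS S P = {g \<in> carrier S. conjS S g ` P = P}"

definition ZS :: "('a, 'b) monoid_scheme \<Rightarrow> 'a set \<Rightarrow> 'a set" where
  "ZS S P = {z \<in> P. \<forall>x\<in>P. z \<otimes>\<^bsub>S\<^esub> x = x \<otimes>\<^bsub>S\<^esub> z}"

(* A fusion system is given by its morphism sets F P Q = Hom_F(P,Q) for subgroups P, Q of S *)
type_synonym 'a fusion = "'a set \<Rightarrow> 'a set \<Rightarrow> ('a \<Rightarrow> 'a) set"

definition F_iso :: "('a, 'b) monoid_scheme \<Rightarrow> 'a fusion \<Rightarrow> 'a set \<Rightarrow> 'a set \<Rightarrow> ('a \<Rightarrow> 'a) \<Rightarrow> bool" where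
  "F_iso S F P Q \<phi> \<longleftrightarrow> \<phi> \<in> F P Q \<and>
     (\<exists>\<psi>\<in>F Q P. (\<forall>x\<in>P. \<psi> (\<phi> x) = x) \<and> (\<forall>y\<in>Q. \<phi> (\<psi> y) = y))"

definition fusion_system :: "('a, 'b) monoid_scheme \<Rightarrow> 'a fusion \<Rightarrow> bool" where
  "fusion_system S F \<longleftrightarrow>
     (\<forall>P Q. subgroup P S \<longrightarrow> subgroup Q S \<longrightarrow> HomS S P Q \<subseteq> F P Q \<and> F P Q \<subseteq> InjS S P Q) \<and>
     (\<forall>P Q R \<phi> \<psi>. subgroup P S \<longrightarrow> subgroup Q S \<longrightarrow> subgroup R S \<longrightarrow>
        \<phi> \<in> F P Q \<longrightarrow> \<psi> \<in> F Q R \<longrightarrow> restrict (\<psi> \<circ> \<phi>) P \<in> F P R) \<and>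
     (\<forall>P Q \<phi>. subgroup P S \<longrightarrow> subgroup Q S \<longrightarrow> \<phi> \<in> F P Q \<longrightarrow> F_iso S F P (\<phi> ` P) \<phi>)"

definition F_conj_sub :: "('a, 'b) monoid_scheme \<Rightarrow> 'a fusion \<Rightarrow> 'a set \<Rightarrow> 'a set \<Rightarrow> bool" where
  "F_conj_sub S F P Q \<longleftrightarrow> subgroup P S \<and> subgroup Q S \<and> (\<exists>\<phi>. F_iso S F P Q \<phi>)"

definition F_conj_elt :: "('a, 'b) monoid_scheme \<Rightarrow> 'a fusion \<Rightarrow> 'a \<Rightarrow> 'a \<Rightarrow> bool" where
  "F_conj_elt S F a b \<longleftrightarrow> (\<exists>\<phi>\<in>F (generate S {a}) (carrier S). \<phi> a = b)"

definition fully_centralized :: "('a, 'b) monoid_scheme \<Rightarrow> 'a fusion \<Rightarrow> 'a set \<Rightarrow> bool" where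
  "fully_centralized S F P \<longleftrightarrow> (\<forall>P'. F_conj_sub S F P P' \<longrightarrow> card (CS S P') \<le> card (CS S P))"

definition fully_normalized :: "('a, 'b) monoid_scheme \<Rightarrow> 'a fusion \<Rightarrow> 'a set \<Rightarrow> bool" where
  "fully_normalized S F P \<longleftrightarrow> (\<forall>P'. F_conj_sub S F P P' \<longrightarrow> card (NS S P') \<le> card (NS S P))"

(* H is a Sylow p-subgroup of the finite group G (H \<subseteq> G a subgroup, as will be the case below) *)
definition sylow_in :: "nat \<Rightarrow> 'c set \<Rightarrow> 'c set \<Rightarrow> bool" where
  "sylow_in p H G \<longleftrightarrow> H \<subseteq> G \<and> (\<exists>k. card H = p ^ k \<and> p ^ k dvd card G \<and> \<not> p ^ (k + 1) dvd card G)"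

definition Nphi :: "('a, 'b) monoid_scheme \<Rightarrow> 'a set \<Rightarrow> ('a \<Rightarrow> 'a) \<Rightarrow> 'a set" where
  "Nphi S P \<phi> = {g \<in> NS S P.
      restrict (\<lambda>y. \<phi> (conjS S g (inv_into P \<phi> y))) (\<phi> ` P) \<in> HomS S (\<phi> ` P) (\<phi> ` P)}"

definition saturated :: "nat \<Rightarrow> ('a, 'b) monoid_scheme \<Rightarrow> 'a fusion \<Rightarrow> bool" where
  "saturated p S F \<longleftrightarrow> fusion_system S F \<and>
     (\<forall>P. subgroup P S \<longrightarrow> fully_normalized S F P \<longrightarrow>
        fully_centralized S F P \<and> sylow_in p (HomS S P P) (F P P)) \<and>
     (\<forall>P \<phi>. subgroup P S \<longrightarrow> \<phi> \<in> F P (carrier S) \<longrightarrow> fully_centralized S F (\<phi> ` P) \<longrightarrow>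
        (\<exists>\<psi>\<in>F (Nphi S P \<phi>) (carrier S). \<forall>x\<in>P. \<psi> x = \<phi> x))"

definition F_centric :: "('a, 'b) monoid_scheme \<Rightarrow> 'a fusion \<Rightarrow> 'a set \<Rightarrow> bool" where
  "F_centric S F P \<longleftrightarrow> subgroup P S \<and> (\<forall>P'. F_conj_sub S F P P' \<longrightarrow> CS S P' \<subseteq> P')"

(* A category with objects the F-centric subgroups, morphism sets lmor P Q,
   composition lcomp P Q R g f = g \<circ> f : P \<rightarrow> R (for f : P \<rightarrow> Q, g : Q \<rightarrow> R), identities lid P,
   the functor \<pi> on morphisms (lpi P Q f \<in> Hom_F(P,Q)), and \<delta>_P = ldelta P. *)
record ('a, 'm) linking =
  lmor :: "'a set \<Rightarrow> 'a set \<Rightarrow> 'm set"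
  lcomp :: "'a set \<Rightarrow> 'a set \<Rightarrow> 'a set \<Rightarrow> 'm \<Rightarrow> 'm \<Rightarrow> 'm"
  lid :: "'a set \<Rightarrow> 'm"
  lpi :: "'a set \<Rightarrow> 'a set \<Rightarrow> 'm \<Rightarrow> ('a \<Rightarrow> 'a)"
  ldelta :: "'a set \<Rightarrow> 'a \<Rightarrow> 'm"

definition centric_linking_system ::
  "('a, 'b) monoid_scheme \<Rightarrow> 'a fusion \<Rightarrow> ('a, 'm) linking \<Rightarrow> bool" where
  "centric_linking_system S F L \<longleftrightarrow>
    (let Ob = {P. F_centric S F P}; M = lmor L; cmp = lcomp L; pi = lpi L; d = ldelta L in
     \<comment> \<open>category axioms\<close>
     (\<forall>P\<in>Ob. \<forall>Q\<in>Ob. \<forall>R\<in>Ob. \<forall>f\<in>M P Q. \<forall>g\<in>M Q R. cmp P Q R g f \<in> M P R) \<and>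
     (\<forall>P\<in>Ob. \<forall>Q\<in>Ob. \<forall>R\<in>Ob. \<forall>T\<in>Ob. \<forall>f\<in>M P Q. \<forall>g\<in>M Q R. \<forall>h\<in>M R T.
        cmp P R T h (cmp P Q R g f) = cmp P Q T (cmp Q R T h g) f) \<and>
     (\<forall>P\<in>Ob. lid L P \<in> M P P) \<and>
     (\<forall>P\<in>Ob. \<forall>Q\<in>Ob. \<forall>f\<in>M P Q. cmp P Q Q (lid L Q) f = f \<and> cmp P P Q f (lid L P) = f) \<and>
     \<comment> \<open>\<pi> is a functor L \<rightarrow> F^c, identity on objects\<close>
     (\<forall>P\<in>Ob. \<forall>Q\<in>Ob. \<forall>f\<in>M P Q. pi P Q f \<in> F P Q) \<and>
     (\<forall>P\<in>Ob. pi P P (lid L P) = restrict (\<lambda>x. x) P) \<and>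
     (\<forall>P\<in>Ob. \<forall>Q\<in>Ob. \<forall>R\<in>Ob. \<forall>f\<in>M P Q. \<forall>g\<in>M Q R.
        pi P R (cmp P Q R g f) = restrict (pi Q R g \<circ> pi P Q f) P) \<and>
     \<comment> \<open>\<delta>_P : P \<rightarrow> Aut_L(P) is an injective group homomorphism\<close>
     (\<forall>P\<in>Ob. (\<forall>g\<in>P. d P g \<in> M P P) \<and> d P \<one>\<^bsub>S\<^esub> = lid L P \<and>
        (\<forall>g\<in>P. \<forall>h\<in>P. d P (g \<otimes>\<^bsub>S\<^esub> h) = cmp P P P (d P g) (d P h)) \<and> inj_on (d P) P) \<and>
     \<comment> \<open>(A)\<close>
     (\<forall>P\<in>Ob. \<forall>Q\<in>Ob.
        (\<forall>f\<in>M P Q. \<forall>z\<in>ZS S P. cmp P P Q f (d P z) = f \<longrightarrow> z = \<one>\<^bsub>S\<^esub>) \<and>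
        pi P Q ` M P Q = F P Q \<and>
        (\<forall>f\<in>M P Q. \<forall>f'\<in>M P Q. pi P Q f = pi P Q f' \<longleftrightarrow> (\<exists>z\<in>ZS S P. f' = cmp P P Q f (d P z)))) \<and>
     \<comment> \<open>(B)\<close>
     (\<forall>P\<in>Ob. \<forall>g\<in>P. pi P P (d P g) = restrict (conjS S g) P) \<and>
     \<comment> \<open>(C)\<close>
     (\<forall>P\<in>Ob. \<forall>Q\<in>Ob. \<forall>f\<in>M P Q. \<forall>g\<in>P.
        cmp P P Q f (d P g) = cmp P Q Q (d Q (pi P Q f g)) f))"

definition p_local_finite_group ::
  "nat \<Rightarrow> ('a, 'b) monoid_scheme \<Rightarrow> 'a fusion \<Rightarrow> ('a, 'm) linking \<Rightarrow> bool" where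
  "p_local_finite_group p S F L \<longleftrightarrow> p_group p S \<and> saturated p S F \<and> centric_linking_system S F L"

definition nilpotent_plg ::
  "('a, 'b) monoid_scheme \<Rightarrow> 'a fusion \<Rightarrow> ('a, 'm) linking \<Rightarrow> bool" where
  "nilpotent_plg S F L \<longleftrightarrow> (\<forall>P Q. subgroup P S \<longrightarrow> subgroup Q S \<longrightarrow> F P Q = HomS S P Q)"

end

theory Submission
  imports Defs
begin

lemma fs_hom: "fusion_system S F \<Longrightarrow> subgroup P S \<Longrightarrow> subgroup Q S \<Longrightarrow> HomS S P Q \<subseteq> F P Q"
  unfolding fusion_system_def by blast

lemma fs_inj: "fusion_system S F \<Longrightarrow> subgroup P S \<Longrightarrow> subgroup Q S \<Longrightarrow> F P Q \<subseteq> InjS S P Q"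
  unfolding fusion_system_def by blast

lemma fs_comp: "fusion_system S F \<Longrightarrow> subgroup P S \<Longrightarrow> subgroup Q S \<Longrightarrow> subgroup R S \<Longrightarrow>
   \<phi> \<in> F P Q \<Longrightarrow> \<psi> \<in> F Q R \<Longrightarrow> restrict (\<psi> \<circ> \<phi>) P \<in> F P R"
  unfolding fusion_system_def by blast

lemma sat_ext: "saturated p S F \<Longrightarrow> subgroup P S \<Longrightarrow> \<phi> \<in> F P (carrier S) \<Longrightarrow> fully_centralized S F (\<phi> ` P) \<Longrightarrow>
        (\<exists>\<psi>\<in>F (Nphi S P \<phi>) (carrier S). \<forall>x\<in>P. \<psi> x = \<phi> x)"
  unfolding saturated_def by blast

lemma conj_triv:
  assumes "comm_group S" "g \<in> carrier S" "x \<in> carrier S"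
  shows "conjS S g x = x"
proof -
  interpret comm_group S by fact
  have "g \<otimes>\<^bsub>S\<^esub> x \<otimes>\<^bsub>S\<^esub> inv\<^bsub>S\<^esub> g = x \<otimes>\<^bsub>S\<^esub> g \<otimes>\<^bsub>S\<^esub> inv\<^bsub>S\<^esub> g" using assms by (simp add: m_comm)
  also have "\<dots> = x" using assms by (simp add: m_assoc)
  finally show ?thesis by (simp add: conjS_def)
qed

lemma HomS_triv:
  assumes "comm_group S" "P \<subseteq> carrier S"
  shows "HomS S P Q = (if P \<subseteq> Q then {restrict (\<lambda>x. x) P} else {})"
proof -
  interpret comm_group S by fact
  have e: "restrict (conjS S g) P = restrict (\<lambda>x. x) P" if "g \<in> carrier S" for g
  proof (rule restrict_ext)
    fix x assume "x \<in> P" thus "conjS S g x = x" using conj_triv[OF assms(1) that] assms(2) by blast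
  qed
  have i: "conjS S g ` P = P" if "g \<in> carrier S" for g
  proof -
    have "conjS S g ` P = (\<lambda>x. x) ` P"
    proof (rule image_cong)
      fix x assume "x \<in> P" thus "conjS S g x = x" using conj_triv[OF assms(1) that] assms(2) by blast
    qed simp
    thus ?thesis by simp
  qed
  have one: "\<one>\<^bsub>S\<^esub> \<in> carrier S" by simp
  show ?thesis
  proof (cases "P \<subseteq> Q")
    case True
    have "HomS S P Q \<subseteq> {restrict (\<lambda>x. x) P}"
    proof
      fix f assume "f \<in> HomS S P Q"
      then obtain g where "f = restrict (conjS S g) P" "g \<in> carrier S" unfolding HomS_def by blast
      thus "f \<in> {restrict (\<lambda>x. x) P}" using e by simp
    qed
    moreover have "restrict (\<lambda>x. x) P \<in> HomS S P Q"
      unfolding HomS_def mem_Collect_eq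
      by (rule exI[of _ "\<one>\<^bsub>S\<^esub>"]) (simp add: e[OF one] i[OF one] True)
    ultimately show ?thesis using True by auto
  next
    case False
    have "HomS S P Q = {}"
    proof (rule equals0I)
      fix f assume "f \<in> HomS S P Q"
      then obtain g where "g \<in> carrier S" "conjS S g ` P \<subseteq> Q" unfolding HomS_def by blast
      thus False using i False by simp
    qed
    then show ?thesis using False by simp
  qed
qed

lemma conj_image:
  assumes "comm_group S" "g \<in> carrier S" "P \<subseteq> carrier S"
  shows "conjS S g ` P = P"
proof -
  have "conjS S g ` P = (\<lambda>x. x) ` P"
  proof (rule image_cong)
    fix x assume "x \<in> P" thus "conjS S g x = x" using conj_triv[OF assms(1,2)] assms(3) by blast
  qed simp
  thus ?thesis by simp
qed

lemma ext_sat: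
  assumes cg: "comm_group S" and sat: "saturated p S F" and P: "subgroup P S"
    and phi: "\<phi> \<in> F P (carrier S)"
  shows "\<exists>\<psi>\<in>F (carrier S) (carrier S). \<forall>x\<in>P. \<psi> x = \<phi> x"
proof -
  interpret comm_group S by fact
  have fs: "fusion_system S F" using sat by (simp add: saturated_def)
  have Ssub: "subgroup (carrier S) S" by (rule subgroup_self)
  have inj: "\<phi> \<in> InjS S P (carrier S)" using fs_inj[OF fs P Ssub] phi by blast
  hence img: "\<phi> ` P \<subseteq> carrier S" by (simp add: InjS_def)
  have Psub: "P \<subseteq> carrier S" using P subgroup.subset by blast
  have CS: "CS S Y = carrier S" if "Y \<subseteq> carrier S" for Y
  proof
    show "CS S Y \<subseteq> carrier S" unfolding CS_def by blast
    show "carrier S \<subseteq> CS S Y"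
    proof
      fix g assume g: "g \<in> carrier S"
      have "\<forall>x\<in>Y. g \<otimes>\<^bsub>S\<^esub> x = x \<otimes>\<^bsub>S\<^esub> g"
      proof
        fix x assume "x \<in> Y" thus "g \<otimes>\<^bsub>S\<^esub> x = x \<otimes>\<^bsub>S\<^esub> g" using that g m_comm by blast
      qed
      thus "g \<in> CS S Y" unfolding CS_def using g by blast
    qed
  qed
  have fc: "fully_centralized S F (\<phi> ` P)"
    unfolding fully_centralized_def
  proof (intro allI impI)
    fix P' assume "F_conj_sub S F (\<phi> ` P) P'"
    hence "subgroup P' S" unfolding F_conj_sub_def by blast
    hence "P' \<subseteq> carrier S" by (rule subgroup.subset)
    thus "card (CS S P') \<le> card (CS S (\<phi> ` P))" using CS img by simp
  qed
  have NS: "NS S P = carrier S"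
    unfolding NS_def using conj_image[OF cg _ Psub] by blast
  have r: "restrict (\<lambda>y. \<phi> (conjS S g (inv_into P \<phi> y))) (\<phi> ` P) = restrict (\<lambda>x. x) (\<phi> ` P)"
    if "g \<in> carrier S" for g
  proof (rule restrict_ext)
    fix y assume y: "y \<in> \<phi> ` P"
    have "inv_into P \<phi> y \<in> P" using y by (rule inv_into_into)
    hence "conjS S g (inv_into P \<phi> y) = inv_into P \<phi> y" using conj_triv[OF cg that] Psub by auto
    thus "\<phi> (conjS S g (inv_into P \<phi> y)) = y" using y by (simp add: f_inv_into_f)
  qed
  have Nphi: "Nphi S P \<phi> = carrier S"
    unfolding Nphi_def NS using r HomS_triv[OF cg img] by auto
  have "\<exists>\<psi>\<in>F (Nphi S P \<phi>) (carrier S). \<forall>x\<in>P. \<psi> x = \<phi> x"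
    by (rule sat_ext[OF sat P phi fc])
  thus ?thesis using Nphi by simp
qed

theorem corollary4p9:
  fixes p :: nat and S :: "('a, 'b) monoid_scheme" and F :: "'a fusion" and L :: "('a, 'm) linking"
  assumes "p_local_finite_group p S F L"
    and "comm_group S"
  shows "nilpotent_plg S F L \<longleftrightarrow>
           ((\<forall>a\<in>carrier S. \<forall>b\<in>carrier S. F_conj_elt S F a b \<longleftrightarrow> a = b) \<or>
            F (carrier S) (carrier S) = {restrict (\<lambda>x. x) (carrier S)})"
proof -
  interpret comm_group S by fact
  have sat: "saturated p S F" using assms(1) by (simp add: p_local_finite_group_def)
  have fs: "fusion_system S F" using sat by (simp add: saturated_def)
  have Ssub: "subgroup (carrier S) S" by (rule subgroup_self)
  have HSS: "HomS S (carrier S) (carrier S) = {restrict (\<lambda>x. x) (carrier S)}"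
    using HomS_triv[OF assms(2)] by simp
  have idS: "restrict (\<lambda>x. x) (carrier S) \<in> F (carrier S) (carrier S)"
    using fs_hom[OF fs Ssub Ssub] HSS by blast
  have two_nil: "nilpotent_plg S F L" if two: "F (carrier S) (carrier S) = {restrict (\<lambda>x. x) (carrier S)}"
    unfolding nilpotent_plg_def
  proof (intro allI impI)
    fix P Q assume P: "subgroup P S" and Q: "subgroup Q S"
    have Psub: "P \<subseteq> carrier S" using P subgroup.subset by blast
    have Qsub: "Q \<subseteq> carrier S" using Q subgroup.subset by blast
    show "F P Q = HomS S P Q"
    proof
      show "HomS S P Q \<subseteq> F P Q" using fs_hom[OF fs P Q] .
    next
      show "F P Q \<subseteq> HomS S P Q"
      proof
        fix \<phi> assume phi: "\<phi> \<in> F P Q"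
        have inj: "\<phi> \<in> InjS S P Q" using fs_inj[OF fs P Q] phi by blast
        hence ext: "\<phi> \<in> extensional P" and img: "\<phi> ` P \<subseteq> Q" by (auto simp: InjS_def)
        have "restrict (\<lambda>x. x) Q \<in> HomS S Q (carrier S)" using HomS_triv[OF assms(2) Qsub] Qsub by simp
        hence iq: "restrict (\<lambda>x. x) Q \<in> F Q (carrier S)" using fs_hom[OF fs Q Ssub] by blast
        have "restrict (restrict (\<lambda>x. x) Q \<circ> \<phi>) P \<in> F P (carrier S)"
          by (rule fs_comp[OF fs P Q Ssub phi iq])
        moreover have "restrict (restrict (\<lambda>x. x) Q \<circ> \<phi>) P = \<phi>"
          using ext img by (intro extensionalityI[OF _ ext]) auto
        ultimately have "\<phi> \<in> F P (carrier S)" by simp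
        then obtain \<psi> where "\<psi> \<in> F (carrier S) (carrier S)" "\<forall>x\<in>P. \<psi> x = \<phi> x"
          using ext_sat[OF assms(2) sat P] by blast
        hence fix1: "\<forall>x\<in>P. \<phi> x = x" using two Psub by (metis restrict_apply' singletonD subsetD)
        hence "P \<subseteq> Q" using img by force
        moreover have "\<phi> = restrict (\<lambda>x. x) P"
          using fix1 by (intro extensionalityI[OF ext]) auto
        ultimately show "\<phi> \<in> HomS S P Q" using HomS_triv[OF assms(2) Psub] by simp
      qed
    qed
  qed
  have one_two: "F (carrier S) (carrier S) = {restrict (\<lambda>x. x) (carrier S)}"
    if one: "\<forall>a\<in>carrier S. \<forall>b\<in>carrier S. F_conj_elt S F a b \<longleftrightarrow> a = b"
  proof
    show "{restrict (\<lambda>x. x) (carrier S)} \<subseteq> F (carrier S) (carrier S)" using idS by simp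
    show "F (carrier S) (carrier S) \<subseteq> {restrict (\<lambda>x. x) (carrier S)}"
    proof
      fix \<alpha> assume al: "\<alpha> \<in> F (carrier S) (carrier S)"
      have inj: "\<alpha> \<in> InjS S (carrier S) (carrier S)" using fs_inj[OF fs Ssub Ssub] al by blast
      hence ext: "\<alpha> \<in> extensional (carrier S)" and img: "\<alpha> ` carrier S \<subseteq> carrier S"
        by (auto simp: InjS_def)
      have "\<alpha> a = a" if a: "a \<in> carrier S" for a
      proof -
        let ?A = "generate S {a}"
        have A: "subgroup ?A S" by (rule generate_is_subgroup) (simp add: a)
        have Asub: "?A \<subseteq> carrier S" by (rule subgroup.subset[OF A])
        have aA: "a \<in> ?A" by (rule generate.incl) simp
        have "restrict (\<lambda>x. x) ?A \<in> HomS S ?A (carrier S)" using HomS_triv[OF assms(2) Asub] Asub by simp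
        hence "restrict (\<lambda>x. x) ?A \<in> F ?A (carrier S)" by (rule subsetD[OF fs_hom[OF fs A Ssub]])
        hence "restrict (\<alpha> \<circ> restrict (\<lambda>x. x) ?A) ?A \<in> F ?A (carrier S)"
          by (rule fs_comp[OF fs A Ssub Ssub _ al])
        moreover have "restrict (\<alpha> \<circ> restrict (\<lambda>x. x) ?A) ?A a = \<alpha> a" using aA by simp
        ultimately have "F_conj_elt S F a (\<alpha> a)" unfolding F_conj_elt_def by blast
        thus ?thesis using one a img by auto
      qed
      hence "\<alpha> = restrict (\<lambda>x. x) (carrier S)" by (intro extensionalityI[OF ext]) auto
      thus "\<alpha> \<in> {restrict (\<lambda>x. x) (carrier S)}" by simp
    qed
  qed
  have nil_two: "F (carrier S) (carrier S) = {restrict (\<lambda>x. x) (carrier S)}" if "nilpotent_plg S F L"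
  proof -
    have "F (carrier S) (carrier S) = HomS S (carrier S) (carrier S)"
      using that Ssub unfolding nilpotent_plg_def by simp
    thus ?thesis using HSS by simp
  qed
  show ?thesis
  proof
    assume "nilpotent_plg S F L" thus "(\<forall>a\<in>carrier S. \<forall>b\<in>carrier S. F_conj_elt S F a b \<longleftrightarrow> a = b) \<or>
            F (carrier S) (carrier S) = {restrict (\<lambda>x. x) (carrier S)}" by (rule disjI2[OF nil_two])
  next
    assume "(\<forall>a\<in>carrier S. \<forall>b\<in>carrier S. F_conj_elt S F a b \<longleftrightarrow> a = b) \<or>
            F (carrier S) (carrier S) = {restrict (\<lambda>x. x) (carrier S)}"
    thus "nilpotent_plg S F L"
    proof
      assume h: "\<forall>a\<in>carrier S. \<forall>b\<in>carrier S. F_conj_elt S F a b \<longleftrightarrow> a = b"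
      show ?thesis by (rule two_nil[OF one_two[OF h]])
    next
      assume h: "F (carrier S) (carrier S) = {restrict (\<lambda>x. x) (carrier S)}"
      show ?thesis by (rule two_nil[OF h])
    qed
  qed
qed

end
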